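(* Let $\mathsf p,\mathsf q$ be self-adjoint on $L^2(\mathbb R)$ with $\mathsf p\mathsf q-\mathsf q\mathsf p=(2\pi\mathsf i)^{-1}$, realized by $\langle x|\mathsf q=x\langle x|$, $\langle x|\mathsf p=\frac{1}{2\pi\mathsf i}\partial_x\langle x|$, and for $s\ge0$ let $|\alpha_s\rangle$ be given by $\langle x|\alpha_s\rangle=\frac{\varphi_b(s-x-c_b+\mathsf i0)}{\varphi_b(s+x+c_b-\mathsf i0)}e^{-2\pi\mathsf i(x+c_b)s}$. Then \[ \bigl(e^{2\pi b\mathsf p}+2\cosh(2\pi b\mathsf q)\bigr)|\alpha_s\rangle=2\cosh(2\pi bs)\,|\alpha_s\rangle . \]
   Context: $b\in\mathbb C$ with $\operatorname{Re}b>0$, $\operatorname{Im}b\ge0$, $c_b=\mathsf i(b+b^{-1})/2$. $\varphi_b$ is the non-compact quantum dilogarithm: $\varphi_b(z)=\exp(-\frac14\int_{\mathbb R}\frac{e^{-2\mathsf izx}dx}{\sinh(xb)\sinh(x/b)x})$ for $|\operatorname{Im}z|<\operatorname{Im}c_b$ (contour above $x=0$), extended meromorphically by $\varphi_b(z+\mathsf ib^{\pm1}/2)=(1+e^{2\pi zb^{\pm1}})\varphi_b(z-\mathsf ib^{\pm1}/2)$. *)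

theory Defs
  imports "HOL-Analysis.Analysis"
begin

definition cb :: "complex \<Rightarrow> complex" where
  "cb b = \<i> * (b + 1 / b) / 2"

definition qd_integrand :: "complex \<Rightarrow> complex \<Rightarrow> complex \<Rightarrow> complex" where
  "qd_integrand b z x = exp (- 2 * \<i> * z * x) / (sinh (x * b) * sinh (x / b) * x)"

text \<open>phi is the non-compact quantum dilogarithm phi_b, with S its (closed, discrete)
  set of singularities: phi is holomorphic off S, given by the integral over the
  contour R + i eps (eps > 0 below the nearest nonzero poles of the integrand, i.e.
  "above x = 0") on the strip |Im z| < Im c_b, and satisfies the functional equations.\<close>
definition is_qdilog :: "complex \<Rightarrow> (complex \<Rightarrow> complex) \<Rightarrow> complex set \<Rightarrow> bool" where
  "is_qdilog b phi S \<longleftrightarrow>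
     (\<forall>z. \<not> z islimpt S) \<and>
     phi holomorphic_on (- S) \<and>
     (\<forall>z::complex. \<bar>Im z\<bar> < Im (cb b) \<longrightarrow>
        (\<forall>eps::real. 0 < eps \<and> eps < pi * min (Re b) (Re b / (cmod b)\<^sup>2) \<longrightarrow>
           phi z = exp (- (1/4) * integral UNIV
                     (\<lambda>t::real. qd_integrand b z (complex_of_real t + \<i> * complex_of_real eps))))) \<and>
     (\<forall>z::complex. z + \<i> * b / 2 \<notin> S \<and> z - \<i> * b / 2 \<notin> S \<longrightarrow>
        phi (z + \<i> * b / 2) = (1 + exp (2 * of_real pi * z * b)) * phi (z - \<i> * b / 2)) \<and>
     (\<forall>z::complex. z + \<i> / b / 2 \<notin> S \<and> z - \<i> / b / 2 \<notin> S \<longrightarrow>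
        phi (z + \<i> / b / 2) = (1 + exp (2 * of_real pi * z / b)) * phi (z - \<i> / b / 2))"

definition alpha :: "complex \<Rightarrow> (complex \<Rightarrow> complex) \<Rightarrow> real \<Rightarrow> complex \<Rightarrow> complex" where
  "alpha b phi s x = phi (of_real s - x - cb b) / phi (of_real s + x + cb b)
                     * exp (- 2 * of_real pi * \<i> * (x + cb b) * of_real s)"

definition alpha_regular :: "complex \<Rightarrow> (complex \<Rightarrow> complex) \<Rightarrow> complex set \<Rightarrow> real \<Rightarrow> complex \<Rightarrow> bool" where
  "alpha_regular b phi S s x \<longleftrightarrow>
     of_real s - x - cb b \<notin> S \<and> of_real s + x + cb b \<notin> S \<and> phi (of_real s + x + cb b) \<noteq> 0"

end

theory Submission
  imports Defs
begin

lemma cosh_c: "cosh (z::complex) = (exp z + exp (-z)) / 2"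
  by (simp add: cosh_def scaleR_conv_of_real)

theorem mainTheorem15:
  fixes b :: complex and phi :: "complex \<Rightarrow> complex" and S :: "complex set"
    and s :: real and x :: complex
  assumes "Re b > 0" and "Im b \<ge> 0"
    and "is_qdilog b phi S"
    and "s \<ge> 0"
    and "alpha_regular b phi S s x" and "alpha_regular b phi S s (x - \<i> * b)"
  shows "alpha b phi s (x - \<i> * b) + 2 * cosh (2 * of_real pi * b * x) * alpha b phi s x
           = 2 * cosh (2 * of_real pi * b * of_real s) * alpha b phi s x"
proof -
  have b0: "b \<noteq> 0" using assms(1) by auto
  define A where "A = of_real s - x - cb b"
  define B where "B = of_real s + x + cb b"
  have FE1: "\<And>z. z + \<i> * b / 2 \<notin> S \<Longrightarrow> z - \<i> * b / 2 \<notin> S \<Longrightarrow>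
        phi (z + \<i> * b / 2) = (1 + exp (2 * of_real pi * z * b)) * phi (z - \<i> * b / 2)"
    using assms(3) unfolding is_qdilog_def by blast
  have r1: "A \<notin> S" "B \<notin> S" "phi B \<noteq> 0"
    using assms(5) unfolding alpha_regular_def A_def B_def by auto
  have r2: "A + \<i> * b \<notin> S" "B - \<i> * b \<notin> S" "phi (B - \<i> * b) \<noteq> 0"
    using assms(6) unfolding alpha_regular_def A_def B_def by (auto simp: algebra_simps)
  have e1: "phi (A + \<i> * b) = (1 + exp (2 * of_real pi * (A + \<i> * b / 2) * b)) * phi A"
    using FE1[of "A + \<i> * b / 2"] r1 r2 by (simp add: algebra_simps)
  have e2: "phi B = (1 + exp (2 * of_real pi * (B - \<i> * b / 2) * b)) * phi (B - \<i> * b)"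
    using FE1[of "B - \<i> * b / 2"] r1 r2 by (simp add: algebra_simps)
  have m1: "exp (- (\<i> * of_real pi)) = -1"
    by (metis exp_pi_i' exp_minus inverse_minus_eq inverse_1 mult.commute)
  have k1: "2 * of_real pi * (A + \<i> * b / 2) * b = 2 * of_real pi * b * (of_real s - x) + (- (\<i> * of_real pi))"
    unfolding A_def cb_def using b0 by (simp add: field_simps)
  have k2: "2 * of_real pi * (B - \<i> * b / 2) * b = 2 * of_real pi * b * (of_real s + x) + \<i> * of_real pi"
    unfolding B_def cb_def using b0 by (simp add: field_simps)
  define u where "u = exp (2 * of_real pi * b * of_real s)"
  define v where "v = exp (2 * of_real pi * b * x)"
  have u0: "u \<noteq> 0" "v \<noteq> 0" unfolding u_def v_def by auto
  have E1: "exp (2 * of_real pi * (A + \<i> * b / 2) * b) = - (u / v)"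
    unfolding k1 exp_add m1 u_def v_def by (simp add: right_diff_distrib exp_diff)
  have E2: "exp (2 * of_real pi * (B - \<i> * b / 2) * b) = - (u * v)"
    unfolding k2 exp_add exp_pi_i' u_def v_def by (simp add: distrib_left exp_add)
  have ex: "exp (- 2 * of_real pi * \<i> * (x - \<i> * b + cb b) * of_real s)
      = exp (- 2 * of_real pi * \<i> * (x + cb b) * of_real s) / u"
  proof -
    have "- 2 * of_real pi * \<i> * (x - \<i> * b + cb b) * of_real s
       = - 2 * of_real pi * \<i> * (x + cb b) * of_real s - 2 * of_real pi * b * of_real s"
      by (simp add: algebra_simps)
    thus ?thesis unfolding u_def by (simp add: exp_diff)
  qed
  have ax: "alpha b phi s (x - \<i> * b) = alpha b phi s x * ((1 - u / v) * (1 - u * v) / u)"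
  proof -
    have "alpha b phi s (x - \<i> * b) = phi (A + \<i> * b) / phi (B - \<i> * b)
          * exp (- 2 * of_real pi * \<i> * (x - \<i> * b + cb b) * of_real s)"
      unfolding alpha_def A_def B_def by (simp add: algebra_simps)
    also have "phi (B - \<i> * b) = phi B / (1 - u * v)"
    proof -
      have "1 - u * v \<noteq> 0" using e2 E2 r1 by auto
      thus ?thesis using e2 E2 by (simp add: field_simps)
    qed
    finally show ?thesis unfolding alpha_def A_def[symmetric] B_def[symmetric] e1 E1 ex
      using u0 by (simp add: field_simps)
  qed
  have ch: "2 * cosh (2 * of_real pi * b * x) = v + 1 / v"
    "2 * cosh (2 * of_real pi * b * of_real s) = u + 1 / u"
    unfolding cosh_c u_def v_def by (simp_all add: exp_minus field_simps)
  show ?thesis unfolding ax ch using u0 by (simp add: field_simps)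
qed

end
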